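(* Let $X$ be a topological space, let $Y$ and $Z$ be locally compact Hausdorff spaces, let $f_1\colon X\to Y$ be continuous and let $f_2\colon Y\to Z$ be proper and continuous. Then $\beta_Y(X,f_1)\cong\beta_Z(X,f_2\circ f_1)$.
   Context: For a locally compact Hausdorff space $B$ and a space $X$ with continuous $r\colon X\to B$, let $H_{(X,r)}\subseteq\mathrm{C_b}(X)$ be the closed linear span of products $g\cdot(h\circ r)$ with $g\in\mathrm{C_b}(X)$, $h\in\mathrm C_0(B)$; the relative Stone--Čech compactification $\beta_B(X,r)$ is the spectrum of the commutative C*-algebra $H_{(X,r)}$, with canonical map $i\colon X\to\beta_B(X,r)$ sending $x$ to evaluation at $x$. *)

theory Defs
  imports "HOL-Analysis.Analysis"
begin

text \<open>Complex-valued functions on the points of a topological space, normalised to be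
  zero outside the topological carrier (so that the sup norm is a genuine norm).\<close>

definition Cb :: "'a topology \<Rightarrow> ('a \<Rightarrow> complex) set" where
  "Cb X = {g. continuous_map X euclidean g \<and> bounded (g ` topspace X) \<and>
              (\<forall>x. x \<notin> topspace X \<longrightarrow> g x = 0)}"

definition C0 :: "'b topology \<Rightarrow> ('b \<Rightarrow> complex) set" where
  "C0 B = {h. continuous_map B euclidean h \<and>
              (\<forall>e>0. \<exists>K. compactin B K \<and> (\<forall>y \<in> topspace B - K. norm (h y) < e)) \<and>
              (\<forall>y. y \<notin> topspace B \<longrightarrow> h y = 0)}"

definition lin_span :: "('a \<Rightarrow> complex) set \<Rightarrow> ('a \<Rightarrow> complex) set" where
  "lin_span S = {f. \<exists>n (c::nat \<Rightarrow> complex) p. (\<forall>i<n. p i \<in> S) \<and>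
                     f = (\<lambda>x. \<Sum>i<n. c i * p i x)}"

definition gens :: "'a topology \<Rightarrow> 'b topology \<Rightarrow> ('a \<Rightarrow> 'b) \<Rightarrow> ('a \<Rightarrow> complex) set" where
  "gens X B r = {(\<lambda>x. g x * h (r x)) | g h. g \<in> Cb X \<and> h \<in> C0 B}"

definition Halg :: "'a topology \<Rightarrow> 'b topology \<Rightarrow> ('a \<Rightarrow> 'b) \<Rightarrow> ('a \<Rightarrow> complex) set" where
  "Halg X B r = {g \<in> Cb X. \<forall>e>0. \<exists>s \<in> lin_span (gens X B r).
                    \<forall>x \<in> topspace X. norm (g x - s x) \<le> e}"

text \<open>Characters (nonzero multiplicative complex-linear functionals) of an algebra A of
  functions, represented as elements of the product space indexed by A.\<close>
definition characters :: "('a \<Rightarrow> complex) set \<Rightarrow> (('a \<Rightarrow> complex) \<Rightarrow> complex) set" where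
  "characters A = {\<phi>. (\<forall>f \<in> A. \<forall>g \<in> A. \<phi> (\<lambda>x. f x + g x) = \<phi> f + \<phi> g) \<and>
                      (\<forall>f \<in> A. \<forall>c. \<phi> (\<lambda>x. c * f x) = c * \<phi> f) \<and>
                      (\<forall>f \<in> A. \<forall>g \<in> A. \<phi> (\<lambda>x. f x * g x) = \<phi> f * \<phi> g) \<and>
                      (\<exists>f \<in> A. \<phi> f \<noteq> 0) \<and>
                      (\<forall>f. f \<notin> A \<longrightarrow> \<phi> f = undefined)}"

text \<open>Gelfand spectrum with the weak-* topology (= subspace of the product topology).\<close>
definition spectrum_top :: "('a \<Rightarrow> complex) set \<Rightarrow> (('a \<Rightarrow> complex) \<Rightarrow> complex) topology" where
  "spectrum_top A = subtopology (product_topology (\<lambda>_. euclidean) A) (characters A)"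

definition rel_beta :: "'a topology \<Rightarrow> 'b topology \<Rightarrow> ('a \<Rightarrow> 'b) \<Rightarrow> (('a \<Rightarrow> complex) \<Rightarrow> complex) topology" where
  "rel_beta X B r = spectrum_top (Halg X B r)"

end

theory Submission
  imports Defs
begin

lemma cmap_cmult:
  fixes f g :: "'a \<Rightarrow> complex"
  shows "continuous_map X euclidean f \<Longrightarrow> continuous_map X euclidean g
   \<Longrightarrow> continuous_map X euclidean (\<lambda>x. f x * g x)"
  by (simp add: continuous_map_atin tendsto_mult)

lemma cmap_ofreal:
  fixes f :: "'a \<Rightarrow> real"
  shows "continuous_map X euclidean f \<Longrightarrow> continuous_map X euclidean (\<lambda>x. complex_of_real (f x))"
  by (simp add: continuous_map_atin tendsto_of_real)

definition apx :: "'a topology \<Rightarrow> ('a \<Rightarrow> complex) set \<Rightarrow> ('a \<Rightarrow> complex) \<Rightarrow> bool" where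
  "apx X S g \<longleftrightarrow> (\<forall>e>0. \<exists>s \<in> lin_span S. \<forall>x \<in> topspace X. norm (g x - s x) \<le> e)"

lemma Halg_apx: "Halg X B r = {g \<in> Cb X. apx X (gens X B r) g}"
  unfolding Halg_def apx_def by simp

lemma lin_span_zero: "(\<lambda>x. 0) \<in> lin_span S"
  unfolding lin_span_def by (intro CollectI exI[of _ 0] exI[of _ "\<lambda>_. 0"] exI[of _ "\<lambda>_. \<lambda>_. 0"]) simp

lemma lin_span_mem: "p \<in> S \<Longrightarrow> p \<in> lin_span S"
  unfolding lin_span_def by (rule CollectI, rule exI[of _ 1], rule exI[of _ "\<lambda>_. 1"],
      rule exI[of _ "\<lambda>_. p"]) auto

lemma lin_span_add1:
  assumes "s \<in> lin_span S" "q \<in> S"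
  shows "(\<lambda>x. s x + c * q x) \<in> lin_span S"
proof -
  obtain n :: nat and d p where p: "\<forall>i<n. p i \<in> S" and s: "s = (\<lambda>x. \<Sum>i<n. d i * p i x)"
    using assms(1) unfolding lin_span_def by blast
  have "(\<lambda>x. s x + c * q x) = (\<lambda>x. \<Sum>i<Suc n. (d(n:=c)) i * (p(n:=q)) i x)"
    by (simp add: s)
  moreover have "\<forall>i<Suc n. (p(n:=q)) i \<in> S" using p assms(2) by (simp add: less_Suc_eq)
  ultimately show ?thesis unfolding lin_span_def
    by (intro CollectI exI[of _ "Suc n"] exI[of _ "d(n:=c)"] exI[of _ "p(n:=q)"] conjI)
qed

lemma lin_span_add:
  assumes "s \<in> lin_span S" "t \<in> lin_span S"
  shows "(\<lambda>x. s x + t x) \<in> lin_span S"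
proof -
  obtain n :: nat and d p where p: "\<forall>i<n. p i \<in> S" and t: "t = (\<lambda>x. \<Sum>i<n. d i * p i x)"
    using assms(2) unfolding lin_span_def by blast
  have "\<forall>m\<le>n. (\<lambda>x. s x + (\<Sum>i<m. d i * p i x)) \<in> lin_span S"
  proof (intro allI impI)
    fix m assume "m \<le> n"
    then show "(\<lambda>x. s x + (\<Sum>i<m. d i * p i x)) \<in> lin_span S"
    proof (induction m)
      case 0 then show ?case using assms(1) by simp
    next
      case (Suc m)
      then have "(\<lambda>x. (s x + (\<Sum>i<m. d i * p i x)) + d m * p m x) \<in> lin_span S"
        using p by (intro lin_span_add1) auto
      then show ?case by (simp add: add.assoc)
    qed
  qed
  then show ?thesis using t by auto
qed

lemma lin_span_smult:
  assumes "s \<in> lin_span S"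
  shows "(\<lambda>x. c * s x) \<in> lin_span S"
proof -
  obtain n :: nat and d p where p: "\<forall>i<n. p i \<in> S" and s: "s = (\<lambda>x. \<Sum>i<n. d i * p i x)"
    using assms(1) unfolding lin_span_def by blast
  have "(\<lambda>x. c * s x) = (\<lambda>x. \<Sum>i<n. (c * d i) * p i x)"
    by (simp add: s sum_distrib_left mult.assoc)
  then show ?thesis using p unfolding lin_span_def
    by (intro CollectI exI[of _ n] exI[of _ "\<lambda>i. c * d i"] exI[of _ p] conjI)
qed

lemma apx_add:
  assumes "apx X S f" "apx X S g"
  shows "apx X S (\<lambda>x. f x + g x)"
  unfolding apx_def
proof (intro allI impI)
  fix e :: real assume e: "e > 0"
  obtain s where s: "s \<in> lin_span S" "\<forall>x \<in> topspace X. norm (f x - s x) \<le> e/2"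
    using assms(1) e unfolding apx_def by (meson half_gt_zero)
  obtain t where t: "t \<in> lin_span S" "\<forall>x \<in> topspace X. norm (g x - t x) \<le> e/2"
    using assms(2) e unfolding apx_def by (meson half_gt_zero)
  have "\<forall>x \<in> topspace X. norm ((f x + g x) - (s x + t x)) \<le> e"
  proof
    fix x assume x: "x \<in> topspace X"
    have "norm ((f x + g x) - (s x + t x)) \<le> norm (f x - s x) + norm (g x - t x)"
      by (metis add_diff_add norm_triangle_ineq)
    then show "norm ((f x + g x) - (s x + t x)) \<le> e" using s t x by fastforce
  qed
  then show "\<exists>u \<in> lin_span S. \<forall>x \<in> topspace X. norm ((f x + g x) - u x) \<le> e"
    by (intro bexI[OF _ lin_span_add[OF s(1) t(1)]]) simp
qed

lemma apx_smult:
  assumes "apx X S f"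
  shows "apx X S (\<lambda>x. c * f x)"
  unfolding apx_def
proof (intro allI impI)
  fix e :: real assume e: "e > 0"
  show "\<exists>u \<in> lin_span S. \<forall>x \<in> topspace X. norm (c * f x - u x) \<le> e"
  proof (cases "c = 0")
    case True then show ?thesis using lin_span_zero e by force
  next
    case False
    then have "e / norm c > 0" using e by simp
    then obtain s where s: "s \<in> lin_span S" "\<forall>x \<in> topspace X. norm (f x - s x) \<le> e / norm c"
      using assms unfolding apx_def by blast
    have "\<forall>x \<in> topspace X. norm (c * f x - c * s x) \<le> e"
    proof
      fix x assume "x \<in> topspace X"
      then have "norm (f x - s x) \<le> e / norm c" using s by blast
      then have "norm c * norm (f x - s x) \<le> e"
        using False by (simp add: pos_le_divide_eq mult.commute)
      moreover have "norm (c * f x - c * s x) = norm c * norm (f x - s x)"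
        by (simp add: right_diff_distrib[symmetric] norm_mult)
      ultimately show "norm (c * f x - c * s x) \<le> e" by simp
    qed
    then show ?thesis by (intro bexI[OF _ lin_span_smult[OF s(1)]]) simp
  qed
qed

lemma apx_mem: assumes "p \<in> S" shows "apx X S p"
  unfolding apx_def by (intro allI impI bexI[OF _ lin_span_mem[OF assms]]) simp

lemma apx_span:
  assumes "\<forall>p \<in> S1. apx X S2 p" "s \<in> lin_span S1"
  shows "apx X S2 s"
proof -
  obtain n :: nat and d p where p: "\<forall>i<n. p i \<in> S1" and s: "s = (\<lambda>x. \<Sum>i<n. d i * p i x)"
    using assms(2) unfolding lin_span_def by blast
  have "\<forall>m\<le>n. apx X S2 (\<lambda>x. \<Sum>i<m. d i * p i x)"
  proof (intro allI impI)
    fix m assume "m \<le> n"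
    then show "apx X S2 (\<lambda>x. \<Sum>i<m. d i * p i x)"
    proof (induction m)
      case 0 then show ?case unfolding apx_def
        by (intro allI impI bexI[OF _ lin_span_zero]) simp
    next
      case (Suc m)
      have "m < n" using Suc.prems by simp
      then have "apx X S2 (p m)" using p assms(1) by blast
      then have "apx X S2 (\<lambda>x. d m * p m x)" by (rule apx_smult)
      moreover have "apx X S2 (\<lambda>x. \<Sum>i<m. d i * p i x)" using Suc by simp
      ultimately have "apx X S2 (\<lambda>x. (\<Sum>i<m. d i * p i x) + d m * p m x)"
        using apx_add by blast
      then show ?case by simp
    qed
  qed
  then show ?thesis using s by auto
qed

lemma apx_trans:
  assumes "\<forall>p \<in> S1. apx X S2 p" "apx X S1 g"
  shows "apx X S2 g"
  unfolding apx_def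
proof (intro allI impI)
  fix e :: real assume e: "e > 0"
  obtain s where s: "s \<in> lin_span S1" "\<forall>x \<in> topspace X. norm (g x - s x) \<le> e/2"
    using assms(2) e unfolding apx_def by (meson half_gt_zero)
  have "apx X S2 s" using apx_span assms(1) s(1) by blast
  then obtain t where t: "t \<in> lin_span S2" "\<forall>x \<in> topspace X. norm (s x - t x) \<le> e/2"
    using e unfolding apx_def by (meson half_gt_zero)
  have "\<forall>x \<in> topspace X. norm (g x - t x) \<le> e"
  proof
    fix x assume x: "x \<in> topspace X"
    have "norm (g x - t x) \<le> norm (g x - s x) + norm (s x - t x)"
      by (rule norm_diff_triangle_le) auto
    then show "norm (g x - t x) \<le> e" using s t x by fastforce
  qed
  then show "\<exists>u \<in> lin_span S2. \<forall>x \<in> topspace X. norm (g x - u x) \<le> e" using t by blast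
qed

lemma gensE:
  assumes "p \<in> gens X B r"
  obtains g h where "p = (\<lambda>x. g x * h (r x))" "g \<in> Cb X" "h \<in> C0 B"
  using assms unfolding gens_def by blast

lemma gens2_in_gens1:
  assumes pr: "proper_map Y Z f2" and c2: "continuous_map Y Z f2" and c1: "continuous_map X Y f1"
    and p: "p \<in> gens X Z (f2 \<circ> f1)"
  shows "p \<in> gens X Y f1"
proof -
  obtain g h where pe: "p = (\<lambda>x. g x * h ((f2 \<circ> f1) x))" and g: "g \<in> Cb X" and h: "h \<in> C0 Z"
    using gensE[OF p] by metis
  define h' where "h' = (\<lambda>y. if y \<in> topspace Y then h (f2 y) else 0)"
  have hc: "continuous_map Z euclidean h" using h unfolding C0_def by blast
  have f2top: "\<And>y. y \<in> topspace Y \<Longrightarrow> f2 y \<in> topspace Z"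
    using c2 unfolding continuous_map_def by blast
  have f1top: "\<And>x. x \<in> topspace X \<Longrightarrow> f1 x \<in> topspace Y"
    using c1 unfolding continuous_map_def by blast
  have "h' \<in> C0 Y"
    unfolding C0_def
  proof (intro CollectI conjI allI impI)
    have "continuous_map Y euclidean (h \<circ> f2)" using continuous_map_compose[OF c2 hc] .
    then show "continuous_map Y euclidean h'"
      by (rule continuous_map_eq) (simp add: h'_def)
  next
    fix e :: real assume e: "e > 0"
    then obtain K where K: "compactin Z K" "\<forall>z \<in> topspace Z - K. norm (h z) < e"
      using h unfolding C0_def by blast
    have "compactin Y {y. y \<in> topspace Y \<and> f2 y \<in> K}"
      using compactin_proper_map_preimage[OF pr K(1)] .
    moreover have "\<forall>y \<in> topspace Y - {y. y \<in> topspace Y \<and> f2 y \<in> K}. norm (h' y) < e"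
      using K(2) f2top by (auto simp: h'_def)
    ultimately show "\<exists>K. compactin Y K \<and> (\<forall>y \<in> topspace Y - K. norm (h' y) < e)" by blast
  next
    fix y assume "y \<notin> topspace Y" then show "h' y = 0" by (simp add: h'_def)
  qed
  moreover have "p = (\<lambda>x. g x * h' (f1 x))"
  proof
    fix x show "p x = g x * h' (f1 x)"
    proof (cases "x \<in> topspace X")
      case True then show ?thesis using f1top by (simp add: pe h'_def)
    next
      case False then have "g x = 0" using g unfolding Cb_def by blast
      then show ?thesis by (simp add: pe)
    qed
  qed
  ultimately show ?thesis unfolding gens_def
    by (intro CollectI exI[of _ g] exI[of _ h'] conjI g)
qed

lemma gens1_apx:
  assumes lz: "locally_compact_space Z" and hz: "Hausdorff_space Z"
    and c2: "continuous_map Y Z f2" and c1: "continuous_map X Y f1"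
    and p: "p \<in> gens X Y f1"
  shows "apx X (gens X Z (f2 \<circ> f1)) p"
  unfolding apx_def
proof (intro allI impI)
  fix e :: real assume e: "e > 0"
  obtain g h where pe: "p = (\<lambda>x. g x * h (f1 x))" and g: "g \<in> Cb X" and h: "h \<in> C0 Y"
    using gensE[OF p] by metis
  have hc: "continuous_map Y euclidean h" using h unfolding C0_def by blast
  have gc: "continuous_map X euclidean g" using g unfolding Cb_def by blast
  have f2top: "\<And>y. y \<in> topspace Y \<Longrightarrow> f2 y \<in> topspace Z"
    using c2 unfolding continuous_map_def by blast
  have f1top: "\<And>x. x \<in> topspace X \<Longrightarrow> f1 x \<in> topspace Y"
    using c1 unfolding continuous_map_def by blast
  obtain M where M: "M > 0" "\<forall>x \<in> topspace X. norm (g x) \<le> M"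
    using g unfolding Cb_def bounded_pos by auto
  obtain K1 where K1: "compactin Y K1" "\<forall>y \<in> topspace Y - K1. norm (h y) < 1"
  proof -
    have "\<forall>e>0. \<exists>K. compactin Y K \<and> (\<forall>y\<in>topspace Y - K. norm (h y) < e)"
      using h unfolding C0_def by blast
    then show ?thesis using that zero_less_one by blast
  qed
  have "compact (h ` K1)" using image_compactin[OF K1(1) hc] by simp
  then have "bounded (h ` K1)" by (rule compact_imp_bounded)
  then obtain B where B: "\<forall>z \<in> h ` K1. norm z \<le> B"
    unfolding bounded_iff by blast
  have hB: "\<forall>y \<in> topspace Y. norm (h y) \<le> max B 1"
  proof
    fix y assume "y \<in> topspace Y"
    show "norm (h y) \<le> max B 1"
    proof (cases "y \<in> K1")
      case True then have "norm (h y) \<le> B" using B by blast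
      then show ?thesis by linarith
    next
      case False then have "norm (h y) < 1" using K1(2) \<open>y \<in> topspace Y\<close> by blast
      then show ?thesis by linarith
    qed
  qed
  define t where "t = e / M"
  have t: "t > 0" using e M by (simp add: t_def)
  obtain K where K: "compactin Y K" "\<forall>y \<in> topspace Y - K. norm (h y) < t"
    using h t unfolding C0_def by blast
  have L: "compactin Z (f2 ` K)" using image_compactin[OF K(1) c2] .
  obtain U C where UC: "openin Z U" "compactin Z C" "closedin Z C" "f2 ` K \<subseteq> U" "U \<subseteq> C"
  proof -
    have "\<forall>K. compactin Z K \<longrightarrow> (\<exists>U L. openin Z U \<and> compactin Z L \<and> closedin Z L \<and> K \<subseteq> U \<and> U \<subseteq> L)"
      using iffD1[OF locally_compact_space_compact_closed_compact[OF disjI1[OF hz]] lz] .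
    then show ?thesis using L that by blast
  qed
  have cr: "completely_regular_space Z"
    using lz hz locally_compact_regular_imp_completely_regular_space by blast
  have "disjnt (f2 ` K) (topspace Z - U)" using UC(4) by (auto simp: disjnt_def)
  moreover have "closedin Z (topspace Z - U)" using UC(1) by blast
  moreover have "(0::real) \<le> 1" by simp
  ultimately obtain \<phi> where \<phi>: "continuous_map Z (subtopology euclidean {0..1::real}) \<phi>"
     "\<phi> ` (topspace Z - U) \<subseteq> {0}" "\<phi> ` (f2 ` K) \<subseteq> {1}"
    using Urysohn_completely_regular_compact_closed[of 0 1 Z "f2 ` K" "topspace Z - U", OF _ cr L]
    by blast
  have \<phi>01: "\<And>z. z \<in> topspace Z \<Longrightarrow> \<phi> z \<in> {0..1}"
    using \<phi>(1) unfolding continuous_map_in_subtopology by blast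
  define k where "k = (\<lambda>z. if z \<in> topspace Z then complex_of_real (\<phi> z) else 0)"
  have "k \<in> C0 Z"
    unfolding C0_def
  proof (intro CollectI conjI allI impI)
    have "continuous_map Z euclidean \<phi>"
      using \<phi>(1) continuous_map_into_fulltopology by blast
    then have "continuous_map Z euclidean (\<lambda>z. complex_of_real (\<phi> z))" by (rule cmap_ofreal)
    then show "continuous_map Z euclidean k"
      by (rule continuous_map_eq) (simp add: k_def)
  next
    fix e' :: real assume e': "e' > 0"
    have "\<forall>z \<in> topspace Z - C. norm (k z) < e'"
    proof
      fix z assume z: "z \<in> topspace Z - C"
      then have "z \<in> topspace Z - U" using UC(5) by blast
      then have "\<phi> z = 0" using \<phi>(2) by blast
      then show "norm (k z) < e'" using z e' by (simp add: k_def)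
    qed
    then show "\<exists>K. compactin Z K \<and> (\<forall>y \<in> topspace Z - K. norm (k y) < e')" using UC(2) by blast
  next
    fix z assume "z \<notin> topspace Z" then show "k z = 0" by (simp add: k_def)
  qed
  define g' where "g' = (\<lambda>x. g x * h (f1 x))"
  have "g' \<in> Cb X"
    unfolding Cb_def
  proof (intro CollectI conjI allI impI)
    have "continuous_map X euclidean (h \<circ> f1)" using continuous_map_compose[OF c1 hc] .
    then have "continuous_map X euclidean (\<lambda>x. h (f1 x))" by (simp add: o_def)
    then show "continuous_map X euclidean g'" unfolding g'_def using gc by (intro cmap_cmult)
  next
    have "\<forall>x \<in> topspace X. norm (g' x) \<le> M * max B 1"
    proof
      fix x assume x: "x \<in> topspace X"
      have "norm (g' x) = norm (g x) * norm (h (f1 x))" by (simp add: g'_def norm_mult)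
      also have "\<dots> \<le> M * max B 1"
        using M x hB f1top by (intro mult_mono) auto
      finally show "norm (g' x) \<le> M * max B 1" .
    qed
    then show "bounded (g' ` topspace X)" unfolding bounded_iff by blast
  next
    fix x assume "x \<notin> topspace X"
    then have "g x = 0" using g unfolding Cb_def by blast
    then show "g' x = 0" by (simp add: g'_def)
  qed
  define q where "q = (\<lambda>x. g' x * k ((f2 \<circ> f1) x))"
  have "q \<in> gens X Z (f2 \<circ> f1)" unfolding gens_def q_def
    by (rule CollectI, rule exI[of _ g'], rule exI[of _ k]) (simp add: \<open>g' \<in> Cb X\<close> \<open>k \<in> C0 Z\<close>)
  then have qs: "q \<in> lin_span (gens X Z (f2 \<circ> f1))" by (rule lin_span_mem)
  have "\<forall>x \<in> topspace X. norm (p x - q x) \<le> e"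
  proof
    fix x assume x: "x \<in> topspace X"
    have eq: "p x - q x = g x * h (f1 x) * (1 - k (f2 (f1 x)))"
      by (simp add: pe q_def g'_def algebra_simps)
    show "norm (p x - q x) \<le> e"
    proof (cases "f1 x \<in> K")
      case True
      then have "f2 (f1 x) \<in> f2 ` K" by blast
      moreover have "f2 (f1 x) \<in> topspace Z" using f1top f2top x by blast
      ultimately have "k (f2 (f1 x)) = 1" using \<phi>(3) by (auto simp: k_def)
      then show ?thesis using eq e by simp
    next
      case False
      have z: "f2 (f1 x) \<in> topspace Z" using f1top f2top x by blast
      then have k1: "norm (1 - k (f2 (f1 x))) \<le> 1"
      proof -
        have "k (f2 (f1 x)) = complex_of_real (\<phi> (f2 (f1 x)))" using z by (simp add: k_def)
        then have "1 - k (f2 (f1 x)) = complex_of_real (1 - \<phi> (f2 (f1 x)))" by simp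
        then have "norm (1 - k (f2 (f1 x))) = \<bar>1 - \<phi> (f2 (f1 x))\<bar>" by (simp only: norm_of_real)
        then show ?thesis using \<phi>01[OF z] by simp
      qed
      have "f1 x \<in> topspace Y - K" using False f1top x by blast
      then have "norm (h (f1 x)) < t" using K(2) by blast
      then have ht: "norm (h (f1 x)) \<le> t" by simp
      have "norm (p x - q x) = norm (g x) * norm (h (f1 x)) * norm (1 - k (f2 (f1 x)))"
        by (simp add: eq norm_mult)
      also have "\<dots> \<le> M * t * 1"
      proof (rule mult_mono)
        show "norm (g x) * norm (h (f1 x)) \<le> M * t"
          by (rule mult_mono) (use M x ht in auto)
        show "norm (1 - k (f2 (f1 x))) \<le> 1" by (rule k1)
        show "0 \<le> M * t" using M t by simp
        show "0 \<le> norm (1 - k (f2 (f1 x)))" by simp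
      qed
      also have "\<dots> = e" using M by (simp add: t_def)
      finally show ?thesis .
    qed
  qed
  then show "\<exists>s \<in> lin_span (gens X Z (f2 \<circ> f1)). \<forall>x \<in> topspace X. norm (p x - s x) \<le> e"
    using qs by blast
qed

theorem lemma4p12:
  fixes X :: "'a topology" and Y :: "'b topology" and Z :: "'c topology"
    and f1 :: "'a \<Rightarrow> 'b" and f2 :: "'b \<Rightarrow> 'c"
  assumes "locally_compact_space Y" and "Hausdorff_space Y"
    and "locally_compact_space Z" and "Hausdorff_space Z"
    and "continuous_map X Y f1"
    and "proper_map Y Z f2" and "continuous_map Y Z f2"
  shows "rel_beta X Y f1 homeomorphic_space rel_beta X Z (f2 \<circ> f1)"
proof -
  have A: "\<forall>p \<in> gens X Y f1. apx X (gens X Z (f2 \<circ> f1)) p"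
    using gens1_apx[OF assms(3,4,7,5)] by blast
  have B: "\<forall>p \<in> gens X Z (f2 \<circ> f1). apx X (gens X Y f1) p"
    using gens2_in_gens1[OF assms(6,7,5)] apx_mem by blast
  have "Halg X Y f1 = Halg X Z (f2 \<circ> f1)"
    unfolding Halg_apx using apx_trans[OF A] apx_trans[OF B] by blast
  then show ?thesis unfolding rel_beta_def by simp
qed

end
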